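(* Let $G=(V,E)$ be a finite simple graph of order $n$ and let $T=n-1$. If $(s,x,y,z)$ is an optimal solution of the Infection Model $\mathrm{IM}(G,T)$ (minimizing $\sum_{v\in V}s_v$), then $C=\{v\in V\colon s_v=1\}$ is a minimum zero forcing set of $G$.
   Context: Zero forcing: under the standard color change rule a filled vertex $u$ can force a non-filled vertex $v$ if $v$ is the only non-filled neighbor of $u$; $C\subseteq V$ is a zero forcing set if, starting with $C$ filled and repeatedly forcing, all of $V$ becomes filled. $\mathrm{Z}(G)$ is the minimum size of a zero forcing set, and a minimum zero forcing set is a zero forcing set of size $\mathrm{Z}(G)$. $N(u)$ is the neighborhood of $u$. Infection Model: let $A$ be the set of arcs containing both $(u,v)$ and $(v,u)$ for each edge $\{u,v\}\in E$. The model $\mathrm{IM}(G,T)$ has variables $s_v\in\{0,1\}$ and $x_v\in\{0,1,\dots,T\}$ for $v\in V$, $y_a\in\{0,1\}$ for $a\in A$, and $z\in\{0,1,\dots,T\}$, subject to: (i) $s_v+\sum_{a=(u,v)\in A}y_a=1$ for all $v\in V$; (ii) $x_u-x_v+(T+1)y_a\leq T$ for all $a=(u,v)\in A$; (iii) $x_w-x_v+(T+1)y_a\leq T$ for all $a=(u,v)\in A$ and $w\in N(u)\setminus\{v\}$; (iv) $x_v-z\leq 0$ for all $v\in V$; objective: minimize $\sum_{v\in V}s_v$. *)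

theory Defs
  imports Main
begin

definition simple_graph :: "'a set \<Rightarrow> ('a \<Rightarrow> 'a \<Rightarrow> bool) \<Rightarrow> bool" where
  "simple_graph V E \<longleftrightarrow> finite V \<and> (\<forall>u v. E u v \<longrightarrow> u \<in> V \<and> v \<in> V)
     \<and> (\<forall>u v. E u v \<longrightarrow> E v u) \<and> (\<forall>u. \<not> E u u)"

definition nbhd :: "'a set \<Rightarrow> ('a \<Rightarrow> 'a \<Rightarrow> bool) \<Rightarrow> 'a \<Rightarrow> 'a set" where
  "nbhd V E u = {v \<in> V. E u v}"

text \<open>One application of the standard color change rule: filled u forces v,
  the only non-filled neighbour of u.\<close>
definition force_step :: "'a set \<Rightarrow> ('a \<Rightarrow> 'a \<Rightarrow> bool) \<Rightarrow> 'a set \<Rightarrow> 'a set \<Rightarrow> bool" where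
  "force_step V E S S' \<longleftrightarrow> (\<exists>u v. u \<in> S \<and> nbhd V E u - S = {v} \<and> S' = insert v S)"

definition zero_forcing_set :: "'a set \<Rightarrow> ('a \<Rightarrow> 'a \<Rightarrow> bool) \<Rightarrow> 'a set \<Rightarrow> bool" where
  "zero_forcing_set V E C \<longleftrightarrow> C \<subseteq> V \<and> (force_step V E)\<^sup>*\<^sup>* C V"

definition zero_forcing_number :: "'a set \<Rightarrow> ('a \<Rightarrow> 'a \<Rightarrow> bool) \<Rightarrow> nat" where
  "zero_forcing_number V E = Min {card C | C. zero_forcing_set V E C}"

definition min_zero_forcing_set :: "'a set \<Rightarrow> ('a \<Rightarrow> 'a \<Rightarrow> bool) \<Rightarrow> 'a set \<Rightarrow> bool" where
  "min_zero_forcing_set V E C \<longleftrightarrow> zero_forcing_set V E C \<and> card C = zero_forcing_number V E"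

definition arcs :: "'a set \<Rightarrow> ('a \<Rightarrow> 'a \<Rightarrow> bool) \<Rightarrow> ('a \<times> 'a) set" where
  "arcs V E = {(u, v). u \<in> V \<and> v \<in> V \<and> E u v}"

text \<open>Feasibility for the Infection Model IM(G,T). Variables are integer-valued functions;
  only their values on V resp. A matter.\<close>
definition IM_feasible :: "'a set \<Rightarrow> ('a \<Rightarrow> 'a \<Rightarrow> bool) \<Rightarrow> int \<Rightarrow>
    ('a \<Rightarrow> int) \<Rightarrow> ('a \<Rightarrow> int) \<Rightarrow> ('a \<times> 'a \<Rightarrow> int) \<Rightarrow> int \<Rightarrow> bool" where
  "IM_feasible V E T s x y z \<longleftrightarrow>
     (\<forall>v\<in>V. s v \<in> {0, 1}) \<and> (\<forall>v\<in>V. 0 \<le> x v \<and> x v \<le> T) \<and>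
     (\<forall>a\<in>arcs V E. y a \<in> {0, 1}) \<and> 0 \<le> z \<and> z \<le> T \<and>
     (\<forall>v\<in>V. s v + (\<Sum>a\<in>{a \<in> arcs V E. snd a = v}. y a) = 1) \<and>
     (\<forall>(u, v)\<in>arcs V E. x u - x v + (T + 1) * y (u, v) \<le> T) \<and>
     (\<forall>(u, v)\<in>arcs V E. \<forall>w \<in> nbhd V E u - {v}. x w - x v + (T + 1) * y (u, v) \<le> T) \<and>
     (\<forall>v\<in>V. x v - z \<le> 0)"

definition IM_optimal :: "'a set \<Rightarrow> ('a \<Rightarrow> 'a \<Rightarrow> bool) \<Rightarrow> int \<Rightarrow>
    ('a \<Rightarrow> int) \<Rightarrow> ('a \<Rightarrow> int) \<Rightarrow> ('a \<times> 'a \<Rightarrow> int) \<Rightarrow> int \<Rightarrow> bool" where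
  "IM_optimal V E T s x y z \<longleftrightarrow> IM_feasible V E T s x y z \<and>
     (\<forall>s' x' y' z'. IM_feasible V E T s' x' y' z' \<longrightarrow> (\<Sum>v\<in>V. s v) \<le> (\<Sum>v\<in>V. s' v))"

end

theory Submission
  imports Defs
begin

lemma feasible_zfs_aux:
  assumes fin: "finite V"
    and feas: "IM_feasible V E T s x y z"
  shows "{v \<in> V. s v = 1} \<subseteq> S \<Longrightarrow> S \<subseteq> V \<Longrightarrow> (force_step V E)\<^sup>*\<^sup>* S V"
proof (induction "card (V - S)" arbitrary: S rule: less_induct)
  case less
  show ?case
  proof (cases "S = V")
    case True then show ?thesis by simp
  next
    case False
    let ?D = "V - S"
    have finD: "finite ?D" using fin by simp
    have neD: "?D \<noteq> {}" using False less.prems by blast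
    define m where "m = Min (x ` ?D)"
    have "m \<in> x ` ?D" unfolding m_def using finD neD by simp
    then obtain v where vD: "v \<in> ?D" and xv: "x v = m" by blast
    have vmin: "\<And>w. w \<in> ?D \<Longrightarrow> x v \<le> x w"
      using finD xv unfolding m_def by simp
    have vV: "v \<in> V" and vS: "v \<notin> S" using vD by auto
    have "s v \<noteq> 1" using vS less.prems vV by blast
    hence sv0: "s v = 0" using feas vV unfolding IM_feasible_def by auto
    let ?I = "{a \<in> arcs V E. snd a = v}"
    have sumI: "(\<Sum>a\<in>?I. y a) = 1" using feas vV sv0 unfolding IM_feasible_def by auto
    have "\<exists>a\<in>?I. y a \<noteq> 0"
    proof (rule ccontr)
      assume "\<not> ?thesis"
      hence "(\<Sum>a\<in>?I. y a) = 0" by (intro sum.neutral) blast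
      with sumI show False by simp
    qed
    then obtain a where aI: "a \<in> ?I" and ya: "y a \<noteq> 0" by blast
    obtain u where a: "a = (u, v)" using aI by (cases a) auto
    have arc: "(u, v) \<in> arcs V E" using aI a by simp
    hence uV: "u \<in> V" and Euv: "E u v" unfolding arcs_def by auto
    have ya1: "y (u, v) = 1" using feas arc ya a unfolding IM_feasible_def by auto
    have "x u - x v + (T + 1) * y (u, v) \<le> T" using feas arc unfolding IM_feasible_def by auto
    hence xu: "x u < x v" using ya1 by simp
    have uS: "u \<in> S" using vmin[of u] xu uV by force
    have nb: "\<And>w. w \<in> nbhd V E u - {v} \<Longrightarrow> w \<in> S"
    proof -
      fix w assume w: "w \<in> nbhd V E u - {v}"
      have "x w - x v + (T + 1) * y (u, v) \<le> T" using feas arc w unfolding IM_feasible_def by fastforce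
      hence "x w < x v" using ya1 by simp
      moreover have "w \<in> V" using w unfolding nbhd_def by auto
      ultimately show "w \<in> S" using vmin[of w] by force
    qed
    have vn: "v \<in> nbhd V E u" unfolding nbhd_def using vV Euv by simp
    have "nbhd V E u - S = {v}" using nb vn vS by blast
    hence step: "force_step V E S (insert v S)" unfolding force_step_def using uS by blast
    have "card (V - insert v S) < card (V - S)"
      using finD vD by (metis Diff_insert card_Diff1_less)
    hence "(force_step V E)\<^sup>*\<^sup>* (insert v S) V"
      using less.hyps less.prems vV by blast
    thus ?thesis using step by (meson converse_rtranclp_into_rtranclp)
  qed
qed

lemma empty_reach: "(force_step V E)\<^sup>*\<^sup>* S S' \<Longrightarrow> S = {} \<Longrightarrow> S' = {}"
  by (induction rule: rtranclp_induct) (auto simp: force_step_def)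

lemma zfs_schedule:
  assumes fin: "finite V" and CV: "C \<subseteq> V"
  shows "(force_step V E)\<^sup>*\<^sup>* C S \<Longrightarrow> \<exists>t f. C \<subseteq> S \<and> S \<subseteq> V \<and>
    (\<forall>v\<in>C. t v = 0) \<and> (\<forall>v\<in>S. 0 \<le> t v \<and> t v \<le> int (card S) - int (card C)) \<and>
    (\<forall>v\<in>S - C. f v \<in> S \<and> E (f v) v \<and> t (f v) < t v \<and>
        (\<forall>w\<in>nbhd V E (f v) - {v}. w \<in> S \<and> t w < t v))"
proof (induction rule: rtranclp_induct)
  case base
  show ?case using CV by (intro exI[of _ "\<lambda>_. 0"]) auto
next
  case (step S S')
  then obtain t f where IH: "C \<subseteq> S" "S \<subseteq> V" "\<forall>v\<in>C. t v = 0"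
    "\<forall>v\<in>S. 0 \<le> t v \<and> t v \<le> int (card S) - int (card C)"
    "\<forall>v\<in>S - C. f v \<in> S \<and> E (f v) v \<and> t (f v) < t v \<and>
        (\<forall>w\<in>nbhd V E (f v) - {v}. w \<in> S \<and> t w < t v)" by blast
  from step.hyps(2) obtain u v where u: "u \<in> S" and nb: "nbhd V E u - S = {v}"
    and S': "S' = insert v S" unfolding force_step_def by blast
  have vn: "v \<in> nbhd V E u" and vS: "v \<notin> S" using nb by auto
  hence vV: "v \<in> V" and Euv: "E u v" unfolding nbhd_def by auto
  have finS: "finite S" using IH(2) fin finite_subset by blast
  have cardS': "card S' = card S + 1" using S' finS vS by simp
  have cC: "card C \<le> card S" using IH(1) finS card_mono by blast
  define k where "k = int (card S) - int (card C) + 1"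
  define t' where "t' = t(v := k)"
  define f' where "f' = f(v := u)"
  have vC: "v \<notin> C" using vS IH(1) by blast
  have "C \<subseteq> S'" "S' \<subseteq> V" using IH S' vV by auto
  moreover have "\<forall>v\<in>C. t' v = 0" using IH(3) vC unfolding t'_def by auto
  moreover have "\<forall>w\<in>S'. 0 \<le> t' w \<and> t' w \<le> int (card S') - int (card C)"
    using IH(4) cardS' cC S' unfolding t'_def k_def by auto
  moreover have "\<forall>w\<in>S' - C. f' w \<in> S' \<and> E (f' w) w \<and> t' (f' w) < t' w \<and>
        (\<forall>w'\<in>nbhd V E (f' w) - {w}. w' \<in> S' \<and> t' w' < t' w)"
  proof
    fix w assume w: "w \<in> S' - C"
    show "f' w \<in> S' \<and> E (f' w) w \<and> t' (f' w) < t' w \<and>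
        (\<forall>w'\<in>nbhd V E (f' w) - {w}. w' \<in> S' \<and> t' w' < t' w)"
    proof (cases "w = v")
      case True
      have tu: "t u < k" using IH(4) u unfolding k_def by auto
      have "\<forall>w'\<in>nbhd V E u - {v}. w' \<in> S \<and> t w' < k"
        using nb IH(4) unfolding k_def by fastforce
      then show ?thesis using True u S' Euv tu vS unfolding t'_def f'_def
        by auto
    next
      case False
      hence wS: "w \<in> S - C" using w S' by auto
      have fw: "f w \<noteq> v" using IH(5) wS vS by blast
      show ?thesis using IH(5) wS False fw S' vS unfolding t'_def f'_def by fastforce
    qed
  qed
  ultimately show ?case by blast
qed

theorem corollary3p3:
  fixes V :: "'a set" and E :: "'a \<Rightarrow> 'a \<Rightarrow> bool"
    and s x :: "'a \<Rightarrow> int" and y :: "'a \<times> 'a \<Rightarrow> int" and z :: int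
  assumes "simple_graph V E"
    and "IM_optimal V E (int (card V) - 1) s x y z"
  shows "min_zero_forcing_set V E {v \<in> V. s v = 1}"
proof -
  let ?T = "int (card V) - 1"
  let ?C = "{v \<in> V. s v = 1}"
  have fin: "finite V" using assms(1) unfolding simple_graph_def by simp
  have feas: "IM_feasible V E ?T s x y z" and opt:
    "\<And>s' x' y' z'. IM_feasible V E ?T s' x' y' z' \<Longrightarrow> (\<Sum>v\<in>V. s v) \<le> (\<Sum>v\<in>V. s' v)"
    using assms(2) unfolding IM_optimal_def by auto
  have Vne: "V \<noteq> {}"
  proof
    assume "V = {}"
    hence "?T = -1" by simp
    with feas show False unfolding IM_feasible_def by auto
  qed
  have zC: "zero_forcing_set V E ?C"
    unfolding zero_forcing_set_def using feasible_zfs_aux[OF fin feas, of ?C] by auto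
  have sumC: "(\<Sum>v\<in>V. s v) = int (card ?C)"
  proof -
    have "(\<Sum>v\<in>V. s v) = (\<Sum>v\<in>V. if s v = 1 then 1 else 0)"
      using feas unfolding IM_feasible_def by (intro sum.cong) auto
    also have "\<dots> = (\<Sum>v\<in>?C. 1)" using fin by (simp add: sum.inter_filter[symmetric])
    finally show ?thesis by simp
  qed
  have le: "card ?C \<le> card C'" if zC': "zero_forcing_set V E C'" for C'
  proof -
    have CV: "C' \<subseteq> V" and r: "(force_step V E)\<^sup>*\<^sup>* C' V"
      using zC' unfolding zero_forcing_set_def by auto
    have C'ne: "C' \<noteq> {}" using empty_reach[OF r] Vne by blast
    have cC': "card C' \<ge> 1" using C'ne CV fin
      by (meson card_0_eq finite_subset less_one not_le)
    obtain t f where sch: "\<forall>v\<in>C'. t v = 0"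
      "\<forall>v\<in>V. 0 \<le> t v \<and> t v \<le> int (card V) - int (card C')"
      "\<forall>v\<in>V - C'. f v \<in> V \<and> E (f v) v \<and> t (f v) < t v \<and>
        (\<forall>w\<in>nbhd V E (f v) - {v}. w \<in> V \<and> t w < t v)"
      using zfs_schedule[OF fin CV r] by blast
    define s' where "s' = (\<lambda>v. if v \<in> C' then 1 else (0::int))"
    define y' where "y' = (\<lambda>(u, v). if v \<notin> C' \<and> u = f v then 1 else (0::int))"
    have finA: "finite (arcs V E)"
    proof (rule finite_subset[of _ "V \<times> V"])
      show "arcs V E \<subseteq> V \<times> V" by (auto simp: arcs_def)
    qed (use fin in simp)
    have tb: "\<forall>v\<in>V. 0 \<le> t v \<and> t v \<le> ?T" using sch(2) cC' by force
    have "IM_feasible V E ?T s' t y' ?T"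
      unfolding IM_feasible_def
    proof (intro conjI)
      show "\<forall>v\<in>V. s' v \<in> {0, 1}" unfolding s'_def by auto
      show "\<forall>v\<in>V. 0 \<le> t v \<and> t v \<le> ?T" by (rule tb)
      show "\<forall>a\<in>arcs V E. y' a \<in> {0, 1}" unfolding y'_def by auto
      show "0 \<le> ?T" using Vne fin by (simp add: Suc_le_eq card_gt_0_iff)
      show "?T \<le> ?T" by simp
      show "\<forall>v\<in>V. s' v + (\<Sum>a\<in>{a \<in> arcs V E. snd a = v}. y' a) = 1"
      proof
        fix v assume vV: "v \<in> V"
        show "s' v + (\<Sum>a\<in>{a \<in> arcs V E. snd a = v}. y' a) = 1"
        proof (cases "v \<in> C'")
          case True
          have "(\<Sum>a\<in>{a \<in> arcs V E. snd a = v}. y' a) = 0"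
            by (rule sum.neutral) (auto simp: y'_def True)
          then show ?thesis using True by (simp add: s'_def)
        next
          case False
          have mem: "(f v, v) \<in> {a \<in> arcs V E. snd a = v}"
            using sch(3) vV False unfolding arcs_def by auto
          have "(\<Sum>a\<in>{a \<in> arcs V E. snd a = v}. y' a) =
                (\<Sum>a\<in>{a \<in> arcs V E. snd a = v}. if a = (f v, v) then 1 else 0)"
            by (rule sum.cong) (auto simp: y'_def False split: if_splits)
          also have "\<dots> = 1"
            by (subst sum.delta) (use mem finA in auto)
          finally show ?thesis using False by (simp add: s'_def)
        qed
      qed
      show "\<forall>(u, v)\<in>arcs V E. t u - t v + (?T + 1) * y' (u, v) \<le> ?T"
      proof (intro ballI, clarify)
        fix u v assume a: "(u, v) \<in> arcs V E"
        hence uV: "u \<in> V" "v \<in> V" unfolding arcs_def by auto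
        show "t u - t v + (?T + 1) * y' (u, v) \<le> ?T"
        proof (cases "v \<notin> C' \<and> u = f v")
          case True
          then show ?thesis using sch(3) uV unfolding y'_def by auto
        next
          case False
          have "0 \<le> t v" "t u \<le> ?T" using tb uV by auto
          with False show ?thesis unfolding y'_def by auto
        qed
      qed
      have key: "t w - t v + (?T + 1) * y' (u, v) \<le> ?T"
        if a: "(u, v) \<in> arcs V E" and w: "w \<in> nbhd V E u - {v}" for u v w
      proof -
        have uV: "u \<in> V" "v \<in> V" "w \<in> V" using a w unfolding arcs_def nbhd_def by auto
        show ?thesis
        proof (cases "v \<notin> C' \<and> u = f v")
          case True
          then show ?thesis using sch(3) uV w unfolding y'_def by auto
        next
          case False
          have "0 \<le> t v" "t w \<le> ?T" using tb uV by auto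
          with False show ?thesis unfolding y'_def by auto
        qed
      qed
      show "\<forall>(u, v)\<in>arcs V E. \<forall>w\<in>nbhd V E u - {v}. t w - t v + (?T + 1) * y' (u, v) \<le> ?T"
        using key by blast
      show "\<forall>v\<in>V. t v - ?T \<le> 0" using tb by auto
    qed
    from opt[OF this] have "int (card ?C) \<le> (\<Sum>v\<in>V. s' v)" using sumC by simp
    also have "(\<Sum>v\<in>V. s' v) = int (card C')"
    proof -
      have "(\<Sum>v\<in>V. s' v) = (\<Sum>v\<in>{v\<in>V. v \<in> C'}. 1)"
        using fin unfolding s'_def by (simp add: sum.inter_filter[symmetric])
      also have "{v\<in>V. v \<in> C'} = C'" using CV by auto
      finally show ?thesis by simp
    qed
    finally show ?thesis by simp
  qed
  have finK: "finite {card C | C. zero_forcing_set V E C}"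
  proof (rule finite_subset[of _ "{..card V}"])
    show "{card C | C. zero_forcing_set V E C} \<subseteq> {..card V}"
      using fin by (auto simp: zero_forcing_set_def intro: card_mono)
  qed simp
  have "zero_forcing_number V E = card ?C"
    unfolding zero_forcing_number_def
    by (rule Min_eqI[OF finK]) (use zC le in auto)
  thus ?thesis unfolding min_zero_forcing_set_def using zC by simp
qed

end
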